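(* Let $p$ be a positive integer, let $J_1,\dots,J_p\in\mathcal{D}(X)$, and let $\ell_1,\dots,\ell_p$ be positive integers. Define the parallel rollout policy $\tilde\mu$ as follows. For each $x\in X$ and each $i=1,\dots,p$, let $\tilde J_i(x)$ be the optimal value of $$\min_{u_0,\dots,u_{\ell_i-1}}\ \sum_{k=0}^{\ell_i-1}g(x_k,u_k)+J_i(x_{\ell_i})\quad\text{s.t. } x_{k+1}=f(x_k,u_k),\ u_k\in U(x_k),\ k=0,\dots,\ell_i-1,\ x_0=x,$$ (equivalently $\tilde J_i(x)=(T^{\ell_i}J_i)(x)$), and let $(\tilde u_0^i,\dots,\tilde u_{\ell_i-1}^i)$ be a minimizing sequence; choose $\tilde i\in\arg\min_{i=1,\dots,p}\tilde J_i(x)$ and set $\tilde\mu(x)=\tilde u_0^{\tilde i}$. Let $\tilde J(x)=\min_{i=1,\dots,p}\tilde J_i(x)$. Then $J_{\tilde\mu}(x)\le\tilde J(x)$ for all $x\in X$.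
   Context: Setting: $X$ (state space) and $U$ (control space) are sets; for each $x\in X$, $U(x)\subset U$ is nonempty; $f:X\times U\to X$ gives dynamics $x_{k+1}=f(x_k,u_k)$; the stage cost $g$ satisfies $0\le g(x,u)\le\infty$ for all $x\in X$, $u\in U(x)$. A stationary policy is a map $\mu:X\to U$ with $\mu(x)\in U(x)$; its cost function is $J_\mu(x_0)=\sum_{k=0}^\infty g(x_k,\mu(x_k))$ with $x_{k+1}=f(x_k,\mu(x_k))$. $\mathcal{E}^+(X)$ denotes the set of all functions $J:X\to[0,\infty]$. The Bellman operator is $(TJ)(x)=\inf_{u\in U(x)}\{g(x,u)+J(f(x,u))\}$; $T^k$ is its $k$-fold composition. The region of decreasing is $\mathcal{D}(X)=\{J\in\mathcal{E}^+(X): (TJ)(x)\le J(x)\ \forall x\in X\}$. Standing assumption: for every $J\in\mathcal{E}^+(X)$ and every $x\in X$, the infimum defining $(TJ)(x)$ is attained. *)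

theory Defs
  imports "HOL-Analysis.Analysis"
begin

definition bellman :: "('x \<Rightarrow> 'u set) \<Rightarrow> ('x \<Rightarrow> 'u \<Rightarrow> 'x) \<Rightarrow> ('x \<Rightarrow> 'u \<Rightarrow> ennreal)
    \<Rightarrow> ('x \<Rightarrow> ennreal) \<Rightarrow> 'x \<Rightarrow> ennreal" where
  "bellman U f g J x = (INF u\<in>U x. g x u + J (f x u))"

definition region_decreasing :: "('x \<Rightarrow> 'u set) \<Rightarrow> ('x \<Rightarrow> 'u \<Rightarrow> 'x) \<Rightarrow> ('x \<Rightarrow> 'u \<Rightarrow> ennreal)
    \<Rightarrow> ('x \<Rightarrow> ennreal) set" where
  "region_decreasing U f g = {J. \<forall>x. bellman U f g J x \<le> J x}"

fun traj :: "('x \<Rightarrow> 'u \<Rightarrow> 'x) \<Rightarrow> 'x \<Rightarrow> (nat \<Rightarrow> 'u) \<Rightarrow> nat \<Rightarrow> 'x" where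
  "traj f x0 us 0 = x0"
| "traj f x0 us (Suc k) = f (traj f x0 us k) (us k)"

definition feasible :: "('x \<Rightarrow> 'u set) \<Rightarrow> ('x \<Rightarrow> 'u \<Rightarrow> 'x) \<Rightarrow> nat \<Rightarrow> 'x \<Rightarrow> (nat \<Rightarrow> 'u) \<Rightarrow> bool" where
  "feasible U f l x0 us \<longleftrightarrow> (\<forall>k<l. us k \<in> U (traj f x0 us k))"

definition lstep_cost :: "('x \<Rightarrow> 'u \<Rightarrow> 'x) \<Rightarrow> ('x \<Rightarrow> 'u \<Rightarrow> ennreal) \<Rightarrow> nat
    \<Rightarrow> ('x \<Rightarrow> ennreal) \<Rightarrow> 'x \<Rightarrow> (nat \<Rightarrow> 'u) \<Rightarrow> ennreal" where
  "lstep_cost f g l J x0 us =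
     (\<Sum>k<l. g (traj f x0 us k) (us k)) + J (traj f x0 us l)"

text \<open>Optimal value of the l-step lookahead problem (only u_0..u_{l-1} matter).\<close>
definition lstep_opt :: "('x \<Rightarrow> 'u set) \<Rightarrow> ('x \<Rightarrow> 'u \<Rightarrow> 'x) \<Rightarrow> ('x \<Rightarrow> 'u \<Rightarrow> ennreal) \<Rightarrow> nat
    \<Rightarrow> ('x \<Rightarrow> ennreal) \<Rightarrow> 'x \<Rightarrow> ennreal" where
  "lstep_opt U f g l J x0 = (INF us\<in>{us. feasible U f l x0 us}. lstep_cost f g l J x0 us)"

definition policy_cost :: "('x \<Rightarrow> 'u \<Rightarrow> 'x) \<Rightarrow> ('x \<Rightarrow> 'u \<Rightarrow> ennreal) \<Rightarrow> ('x \<Rightarrow> 'u) \<Rightarrow> 'x \<Rightarrow> ennreal" where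
  "policy_cost f g mu x0 =
     (\<Sum>k. g (((\<lambda>x. f x (mu x)) ^^ k) x0) (mu (((\<lambda>x. f x (mu x)) ^^ k) x0)))"

end

theory Submission
  imports Defs
begin

lemma traj_agree:
  "(\<forall>j<k. us j = vs j) \<Longrightarrow> traj f x us k = traj f x vs k"
  by (induction k) auto

lemma traj_shift:
  "traj f x us (Suc k) = traj f (f x (us 0)) (\<lambda>k. us (Suc k)) k"
  by (induction k) auto

lemma ext_step:
  assumes dec: "\<And>y. bellman U f g J y \<le> J y"
    and att: "\<And>y. \<exists>u\<in>U y. bellman U f g J y = g y u + J (f y u)"
    and fe: "feasible U f m y vs"
  shows "\<exists>ws. feasible U f (Suc m) y ws \<and> lstep_cost f g (Suc m) J y ws \<le> lstep_cost f g m J y vs"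
proof -
  obtain u where u: "u \<in> U (traj f y vs m)"
    "bellman U f g J (traj f y vs m) = g (traj f y vs m) u + J (f (traj f y vs m) u)"
    using att by blast
  define ws where "ws = vs(m := u)"
  have tr: "traj f y ws k = traj f y vs k" if "k \<le> m" for k
    using that by (intro traj_agree) (auto simp: ws_def)
  have "feasible U f (Suc m) y ws"
    using fe u tr unfolding feasible_def ws_def
    by (metis fun_upd_apply less_Suc_eq less_imp_le_nat order_refl)
  moreover have "lstep_cost f g (Suc m) J y ws = (\<Sum>k<m. g (traj f y vs k) (vs k)) + (g (traj f y vs m) u + J (f (traj f y vs m) u))"
    unfolding lstep_cost_def using tr
    by (simp add: add.assoc ws_def)
  moreover have "\<dots> \<le> lstep_cost f g m J y vs"
    unfolding lstep_cost_def using dec[of "traj f y vs m"] u(2) by (simp add: add_left_mono)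
  ultimately show ?thesis by auto
qed

theorem proposition4:
  fixes U :: "'x \<Rightarrow> 'u set" and f :: "'x \<Rightarrow> 'u \<Rightarrow> 'x" and g :: "'x \<Rightarrow> 'u \<Rightarrow> ennreal"
    and p :: nat and J :: "nat \<Rightarrow> 'x \<Rightarrow> ennreal" and l :: "nat \<Rightarrow> nat"
    and mu :: "'x \<Rightarrow> 'u"
  assumes U_nonempty: "\<And>x. U x \<noteq> {}"
    and attained: "\<And>(J' :: 'x \<Rightarrow> ennreal) x. \<exists>u\<in>U x. bellman U f g J' x = g x u + J' (f x u)"
    and p_pos: "p \<ge> 1"
    and J_dec: "\<And>i. i \<in> {1..p} \<Longrightarrow> J i \<in> region_decreasing U f g"
    and l_pos: "\<And>i. i \<in> {1..p} \<Longrightarrow> l i \<ge> 1"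
    and mu_def: "\<And>x. \<exists>i\<in>{1..p}. \<exists>us.
        lstep_opt U f g (l i) (J i) x = Min ((\<lambda>j. lstep_opt U f g (l j) (J j) x) ` {1..p})
        \<and> feasible U f (l i) x us
        \<and> lstep_cost f g (l i) (J i) x us = lstep_opt U f g (l i) (J i) x
        \<and> mu x = us 0"
  shows "\<forall>x. policy_cost f g mu x \<le> Min ((\<lambda>i. lstep_opt U f g (l i) (J i) x) ` {1..p})"
proof -
  define Jt where "Jt x = Min ((\<lambda>i. lstep_opt U f g (l i) (J i) x) ` {1..p})" for x
  define F where "F x = f x (mu x)" for x
  have key: "g x (mu x) + Jt (F x) \<le> Jt x" for x
  proof -
    obtain i us where i: "i \<in> {1..p}"
      and h1: "lstep_opt U f g (l i) (J i) x = Jt x"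
      and fe: "feasible U f (l i) x us"
      and h2: "lstep_cost f g (l i) (J i) x us = lstep_opt U f g (l i) (J i) x"
      and mu: "mu x = us 0"
      using mu_def[of x] unfolding Jt_def by blast
    obtain m where m: "l i = Suc m" using l_pos[OF i] by (cases "l i") auto
    define vs where "vs = (\<lambda>k. us (Suc k))"
    have fev: "feasible U f m (F x) vs"
      using fe unfolding feasible_def m vs_def F_def mu
      by (metis Suc_mono traj_shift)
    have split: "lstep_cost f g (l i) (J i) x us = g x (mu x) + lstep_cost f g m (J i) (F x) vs"
      unfolding lstep_cost_def m sum.lessThan_Suc_shift
      by (simp add: traj_shift[of f x us] vs_def F_def mu add.assoc del: traj.simps(2))
    have dec: "\<And>y. bellman U f g (J i) y \<le> J i y"
      using J_dec[OF i] unfolding region_decreasing_def by blast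
    obtain ws where ws: "feasible U f (Suc m) (F x) ws"
      "lstep_cost f g (Suc m) (J i) (F x) ws \<le> lstep_cost f g m (J i) (F x) vs"
      using ext_step[OF dec attained fev] by blast
    have "Jt (F x) \<le> lstep_opt U f g (l i) (J i) (F x)"
      unfolding Jt_def using i by (intro Min_le) auto
    also have "\<dots> \<le> lstep_cost f g (Suc m) (J i) (F x) ws"
      unfolding lstep_opt_def m using ws(1) by (intro INF_lower) auto
    also have "\<dots> \<le> lstep_cost f g m (J i) (F x) vs" by (rule ws(2))
    finally have "g x (mu x) + Jt (F x) \<le> g x (mu x) + lstep_cost f g m (J i) (F x) vs"
      by (rule add_left_mono)
    also have "\<dots> = Jt x" using split h1 h2 by simp
    finally show ?thesis .
  qed
  have iter: "(\<Sum>k<n. g ((F ^^ k) x) (mu ((F ^^ k) x))) + Jt ((F ^^ n) x) \<le> Jt x" for n x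
  proof (induction n arbitrary: x)
    case 0
    then show ?case by simp
  next
    case (Suc n)
    have "(\<Sum>k<Suc n. g ((F ^^ k) x) (mu ((F ^^ k) x))) + Jt ((F ^^ Suc n) x)
        = g x (mu x) + ((\<Sum>k<n. g ((F ^^ k) (F x)) (mu ((F ^^ k) (F x)))) + Jt ((F ^^ n) (F x)))"
      unfolding sum.lessThan_Suc_shift by (simp add: funpow_Suc_right add.assoc del: funpow.simps)
    also have "\<dots> \<le> g x (mu x) + Jt (F x)" by (intro add_left_mono Suc.IH)
    also have "\<dots> \<le> Jt x" by (rule key)
    finally show ?case .
  qed
  show ?thesis
  proof
    fix x
    have "policy_cost f g mu x = (\<Sum>k. g ((F ^^ k) x) (mu ((F ^^ k) x)))"
      unfolding policy_cost_def F_def by simp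
    also have "\<dots> = (SUP n. \<Sum>k<n. g ((F ^^ k) x) (mu ((F ^^ k) x)))"
      by (rule suminf_eq_SUP)
    also have "\<dots> \<le> Jt x"
    proof (rule SUP_least)
      fix n
      show "(\<Sum>k<n. g ((F ^^ k) x) (mu ((F ^^ k) x))) \<le> Jt x"
        using iter[of x n] by (meson add_increasing2 order_trans zero_le order_refl)
    qed
    finally show "policy_cost f g mu x \<le> Min ((\<lambda>i. lstep_opt U f g (l i) (J i) x) ` {1..p})"
      unfolding Jt_def .
  qed
qed

end
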